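(* For $g\ge3$, the inflation map $H^2(\mathfrak H,A)\to H^2(\mathsf{Sp}(2g,\mathbb Z/4),A)$ is injective for every abelian group $A$ with trivial action.
   Context: $\mathsf{Sp}(2g,R)$ is the group of $2g\times2g$ matrices over $R$ with $X^tJX=J$, $J=\begin{pmatrix}0&I\\-I&0\end{pmatrix}$. The kernel of $\mathsf{Sp}(2g,\mathbb Z/4)\to\mathsf{Sp}(2g,2)$ consists of matrices $\begin{pmatrix}I+2\mathrm a&2\mathrm b\\2\mathrm c&I-2\mathrm a^t\end{pmatrix}$ with $\mathrm b,\mathrm c$ symmetric (entries mod $2$). $Y$ is the normal subgroup of those with $\mathsf{Diag}(\mathrm b)=\mathsf{Diag}(\mathrm c)=0$ and $\mathsf{Tr}(\mathrm a)=0$ mod $2$, and $\mathfrak H=\mathsf{Sp}(2g,\mathbb Z/4)/Y$. *)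

theory Defs
  imports "Jordan_Normal_Form.Matrix" "HOL-Library.Numeral_Type" "HOL-Algebra.Coset"
begin

text \<open>A 2-cochain on a group G with values in an abelian group A (trivial action) is a
function on carrier G x carrier G; only its values on the carrier matter.\<close>

definition cocycle2 :: "('g, 'b) monoid_scheme \<Rightarrow> ('g \<Rightarrow> 'g \<Rightarrow> 'a::ab_group_add) \<Rightarrow> bool" where
  "cocycle2 G f \<longleftrightarrow> (\<forall>x\<in>carrier G. \<forall>y\<in>carrier G. \<forall>z\<in>carrier G.
      f y z - f (x \<otimes>\<^bsub>G\<^esub> y) z + f x (y \<otimes>\<^bsub>G\<^esub> z) - f x y = 0)"

definition coboundary2 :: "('g, 'b) monoid_scheme \<Rightarrow> ('g \<Rightarrow> 'g \<Rightarrow> 'a::ab_group_add) \<Rightarrow> bool" where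
  "coboundary2 G f \<longleftrightarrow> (\<exists>h :: 'g \<Rightarrow> 'a. \<forall>x\<in>carrier G. \<forall>y\<in>carrier G.
      f x y = h y - h (x \<otimes>\<^bsub>G\<^esub> y) + h x)"

definition cohomologous2 :: "('g, 'b) monoid_scheme \<Rightarrow> ('g \<Rightarrow> 'g \<Rightarrow> 'a::ab_group_add) \<Rightarrow> ('g \<Rightarrow> 'g \<Rightarrow> 'a) \<Rightarrow> bool" where
  "cohomologous2 G f1 f2 \<longleftrightarrow> coboundary2 G (\<lambda>x y. f1 x y - f2 x y)"

definition inflation2 :: "('g, 'b) monoid_scheme \<Rightarrow> 'g set \<Rightarrow> ('g set \<Rightarrow> 'g set \<Rightarrow> 'a) \<Rightarrow> ('g \<Rightarrow> 'g \<Rightarrow> 'a)" where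
  "inflation2 G N f = (\<lambda>x y. f (N #>\<^bsub>G\<^esub> x) (N #>\<^bsub>G\<^esub> y))"

definition J_mat :: "nat \<Rightarrow> 4 mat" where
  "J_mat g = four_block_mat (0\<^sub>m g g) (1\<^sub>m g) (- (1\<^sub>m g)) (0\<^sub>m g g)"

definition Sp4 :: "nat \<Rightarrow> 4 mat set" where
  "Sp4 g = {X \<in> carrier_mat (2*g) (2*g). transpose_mat X * J_mat g * X = J_mat g}"

definition Sp4_group :: "nat \<Rightarrow> 4 mat monoid" where
  "Sp4_group g = \<lparr>carrier = Sp4 g, mult = (*), one = 1\<^sub>m (2*g)\<rparr>"

text \<open>The normal subgroup Y: matrices [[I+2a, 2b],[2c, I-2a^t]] (a, b, c integer g x g
matrices read mod 2, b and c symmetric) with Diag(b) = Diag(c) = 0 and Tr(a) = 0 mod 2.\<close>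

definition Y4 :: "nat \<Rightarrow> 4 mat set" where
  "Y4 g = {X \<in> Sp4 g. \<exists>a b c :: nat \<Rightarrow> nat \<Rightarrow> int.
      (\<forall>i<g. \<forall>j<g.
          X $$ (i, j) = of_int ((if i = j then 1 else 0) + 2 * a i j)
        \<and> X $$ (i, g + j) = of_int (2 * b i j)
        \<and> X $$ (g + i, j) = of_int (2 * c i j)
        \<and> X $$ (g + i, g + j) = of_int ((if i = j then 1 else 0) - 2 * a j i)
        \<and> even (b i j - b j i) \<and> even (c i j - c j i))
    \<and> (\<forall>i<g. even (b i i) \<and> even (c i i))
    \<and> even (\<Sum>i<g. a i i)}"

definition frakH :: "nat \<Rightarrow> 4 mat set monoid" where
  "frakH g = Sp4_group g Mod Y4 g"

end

theory Submission
  imports Defs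
begin

definition imat :: "nat \<Rightarrow> (nat \<Rightarrow> nat \<Rightarrow> int) \<Rightarrow> 4 mat" where
  "imat n f = mat n n (\<lambda>(i,j). of_int (f i j))"

definition cv :: "nat \<Rightarrow> (nat \<Rightarrow> nat \<Rightarrow> int) \<Rightarrow> (nat \<Rightarrow> nat \<Rightarrow> int) \<Rightarrow> nat \<Rightarrow> nat \<Rightarrow> int" where
  "cv n f h = (\<lambda>i j. \<Sum>r<n. f i r * h r j)"

definition dl :: "nat \<Rightarrow> nat \<Rightarrow> int" where
  "dl i j = (if i = j then 1 else 0)"

lemma imat_carrier[simp]: "imat n f \<in> carrier_mat n n"
  by (simp add: imat_def)

lemma imat_dims[simp]: "dim_row (imat n f) = n" "dim_col (imat n f) = n"
  by (auto simp: imat_def)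

lemma imat_index[simp]: "i < n \<Longrightarrow> j < n \<Longrightarrow> imat n f $$ (i,j) = of_int (f i j)"
  by (simp add: imat_def)

lemma imat_mult: "imat n f * imat n h = imat n (cv n f h)"
  by (rule eq_matI) (auto simp: scalar_prod_def cv_def lessThan_atLeast0 intro!: sum.cong)

lemma of_int_4_eq: "4 dvd (x - y) \<Longrightarrow> (of_int x :: 4) = of_int y"
proof -
  assume "4 dvd (x - y)"
  hence "(of_int (x - y) :: 4) = 0" by (subst of_int_eq_0_iff_char_dvd) simp
  thus ?thesis by simp
qed

lemma imat_eqI: "(\<And>i j. i < n \<Longrightarrow> j < n \<Longrightarrow> 4 dvd (f i j - h i j)) \<Longrightarrow> imat n f = imat n h"
  by (rule eq_matI) (auto intro: of_int_4_eq)

lemma imat_transpose: "transpose_mat (imat n f) = imat n (\<lambda>i j. f j i)"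
  by (rule eq_matI) auto

lemma imat_dl: "imat n dl = 1\<^sub>m n"
  by (rule eq_matI) (auto simp: dl_def)

lemma cv_dl_left: "i < n \<Longrightarrow> cv n dl h i j = h i j"
proof -
  assume "i < n"
  have "cv n dl h i j = (\<Sum>r<n. if r = i then h r j else 0)"
    unfolding cv_def dl_def by (rule sum.cong) auto
  thus ?thesis using \<open>i < n\<close> by simp
qed

lemma cv_dl_right: "j < n \<Longrightarrow> cv n f dl i j = f i j"
proof -
  assume "j < n"
  have "cv n f dl i j = (\<Sum>r<n. if r = j then f i r else 0)"
    unfolding cv_def dl_def by (rule sum.cong) auto
  thus ?thesis using \<open>j < n\<close> by simp
qed

lemma cv_lin_left: "cv n (\<lambda>i j. f i j + c * f' i j) h i j = cv n f h i j + c * cv n f' h i j"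
  by (simp add: cv_def algebra_simps sum.distrib sum_distrib_left)

lemma cv_lin_right: "cv n f (\<lambda>i j. h i j + c * h' i j) i j = cv n f h i j + c * cv n f h' i j"
  by (simp add: cv_def algebra_simps sum.distrib sum_distrib_left)



definition Jf :: "nat \<Rightarrow> nat \<Rightarrow> nat \<Rightarrow> int" where
  "Jf g p q = (if p < g \<and> q = p + g then 1 else if g \<le> p \<and> p = q + g then -1 else 0)"

lemma J_imat: "J_mat g = imat (2*g) (Jf g)"
  unfolding J_mat_def
  by (rule eq_matI) (auto simp: Jf_def)

lemma cvJ_left: "p < 2*g \<Longrightarrow> cv (2*g) (Jf g) h p q = (if p < g then h (p+g) q else - h (p-g) q)"
proof -
  assume p: "p < 2*g"
  have "cv (2*g) (Jf g) h p q = (\<Sum>r<2*g. if r = (if p < g then p + g else p - g) then (if p < g then h r q else - h r q) else 0)"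
    unfolding cv_def Jf_def by (rule sum.cong) auto
  also have "\<dots> = (if p < g then h (p+g) q else - h (p-g) q)"
    using p by (subst sum.delta) auto
  finally show ?thesis .
qed

lemma cvJ_right: "q < 2*g \<Longrightarrow> cv (2*g) f (Jf g) p q = (if q < g then - f p (q+g) else f p (q-g))"
proof -
  assume q: "q < 2*g"
  have "cv (2*g) f (Jf g) p q = (\<Sum>r<2*g. if r = (if q < g then q + g else q - g) then (if q < g then - f p r else f p r) else 0)"
    unfolding cv_def Jf_def using q by (intro sum.cong) auto
  also have "\<dots> = (if q < g then - f p (q+g) else f p (q-g))"
    using q by (cases "q < g") (simp_all add: sum.delta)
  finally show ?thesis .
qed

lemma Sp_crit:
  assumes "\<And>p q. p < 2*g \<Longrightarrow> q < 2*g \<Longrightarrow> 4 dvd (cv (2*g) (cv (2*g) (\<lambda>i j. F j i) (Jf g)) F p q - Jf g p q)"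
  shows "imat (2*g) F \<in> Sp4 g"
  unfolding Sp4_def using assms
  by (auto simp: J_imat imat_transpose imat_mult intro!: imat_eqI)

definition Mf :: "nat \<Rightarrow> (nat \<Rightarrow> nat \<Rightarrow> int) \<Rightarrow> 4 mat" where
  "Mf g \<phi> = imat (2*g) (\<lambda>p q. dl p q + 2 * \<phi> p q)"

lemma Mf_Sp_gen:
  assumes "\<And>p q. p < 2*g \<Longrightarrow> q < 2*g \<Longrightarrow>
     even ((if q < g then - \<phi> (q+g) p else \<phi> (q-g) p) + (if p < g then \<phi> (p+g) q else - \<phi> (p-g) q))"
  shows "Mf g \<phi> \<in> Sp4 g"
  unfolding Mf_def
proof (rule Sp_crit)
  fix p q assume p: "p < 2*g" and q: "q < 2*g"
  let ?n = "2*g"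
  define C where "C = cv ?n (\<lambda>i j. dl j i + 2 * \<phi> j i) (Jf g)"
  have dls: "(\<lambda>i j. dl j i + 2 * \<phi> j i) = (\<lambda>i j. dl i j + 2 * \<phi> j i)"
    by (intro ext) (auto simp: dl_def)
  have C1: "C p r = Jf g p r + 2 * cv ?n (\<lambda>i j. \<phi> j i) (Jf g) p r" for r
    unfolding C_def dls cv_lin_left using p by (simp add: cv_dl_left)
  have C2: "cv ?n C \<phi> p q = cv ?n (Jf g) \<phi> p q + 2 * cv ?n (cv ?n (\<lambda>i j. \<phi> j i) (Jf g)) \<phi> p q"
  proof -
    have "cv ?n C \<phi> p q = cv ?n (\<lambda>i j. cv ?n dl (Jf g) i j + 2 * cv ?n (\<lambda>i j. \<phi> j i) (Jf g) i j) \<phi> p q"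
    proof -
      have "C = (\<lambda>i j. cv ?n dl (Jf g) i j + 2 * cv ?n (\<lambda>i j. \<phi> j i) (Jf g) i j)"
        by (intro ext) (simp add: C_def dls cv_lin_left)
      thus ?thesis by simp
    qed
    also have "\<dots> = cv ?n (cv ?n dl (Jf g)) \<phi> p q + 2 * cv ?n (cv ?n (\<lambda>i j. \<phi> j i) (Jf g)) \<phi> p q"
      by (rule cv_lin_left)
    also have "cv ?n (cv ?n dl (Jf g)) \<phi> p q = cv ?n (Jf g) \<phi> p q"
      unfolding cv_def using p by (intro sum.cong) (auto simp: cv_dl_left[unfolded cv_def])
    finally show ?thesis .
  qed
  have "cv ?n C (\<lambda>i j. dl i j + 2 * \<phi> i j) p q = C p q + 2 * cv ?n C \<phi> p q"
    using q by (simp add: cv_lin_right cv_dl_right)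
  also have "\<dots> = Jf g p q + 2 * ((if q < g then - \<phi> (q+g) p else \<phi> (q-g) p) + (if p < g then \<phi> (p+g) q else - \<phi> (p-g) q))
       + 4 * cv ?n (cv ?n (\<lambda>i j. \<phi> j i) (Jf g)) \<phi> p q"
    unfolding C1 C2 cvJ_left[OF p] cvJ_right[OF q] using p q by (simp add: algebra_simps)
  finally have E: "cv ?n C (\<lambda>i j. dl i j + 2 * \<phi> i j) p q = \<dots>" .
  obtain t where t: "(if q < g then - \<phi> (q+g) p else \<phi> (q-g) p) + (if p < g then \<phi> (p+g) q else - \<phi> (p-g) q) = 2 * t"
    using assms[OF p q] by (rule evenE)
  show "4 dvd (cv ?n C (\<lambda>i j. dl i j + 2 * \<phi> i j) p q - Jf g p q)"
    unfolding E t by simp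
qed



definition emb :: "nat \<Rightarrow> (nat \<Rightarrow> nat \<Rightarrow> int) \<Rightarrow> (nat \<Rightarrow> nat \<Rightarrow> int) \<Rightarrow> (nat \<Rightarrow> nat \<Rightarrow> int) \<Rightarrow> nat \<Rightarrow> nat \<Rightarrow> int" where
  "emb g a b c = (\<lambda>p q. if p < g then (if q < g then a p q else b p (q-g))
                      else (if q < g then c (p-g) q else - a (q-g) (p-g)))"

definition Ycond :: "nat \<Rightarrow> (nat \<Rightarrow> nat \<Rightarrow> int) \<Rightarrow> (nat \<Rightarrow> nat \<Rightarrow> int) \<Rightarrow> (nat \<Rightarrow> nat \<Rightarrow> int) \<Rightarrow> bool" where
  "Ycond g a b c \<longleftrightarrow> (\<forall>i<g. \<forall>j<g. even (b i j - b j i) \<and> even (c i j - c j i))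
     \<and> (\<forall>i<g. even (b i i) \<and> even (c i i)) \<and> even (\<Sum>i<g. a i i)"

lemma Mf_emb_Sp:
  assumes "\<forall>i<g. \<forall>j<g. even (b i j - b j i) \<and> even (c i j - c j i)"
  shows "Mf g (emb g a b c) \<in> Sp4 g"
proof (rule Mf_Sp_gen)
  fix p q assume p: "p < 2*g" and q: "q < 2*g"
  show "even ((if q < g then - emb g a b c (q+g) p else emb g a b c (q-g) p) +
              (if p < g then emb g a b c (p+g) q else - emb g a b c (p-g) q))"
  proof (cases "p < g"; cases "q < g")
    assume "p < g" "q < g"
    thus ?thesis using assms by (simp add: emb_def)
  next
    assume "p < g" "\<not> q < g"
    moreover have "q - g < g" using q by simp
    ultimately show ?thesis by (simp add: emb_def)
  next
    assume "\<not> p < g" "q < g"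
    moreover have "p - g < g" using p by simp
    ultimately show ?thesis by (simp add: emb_def)
  next
    assume a1: "\<not> p < g" "\<not> q < g"
    hence "p - g < g" "q - g < g" using p q by auto
    thus ?thesis using assms a1 by (simp add: emb_def)
  qed
qed

lemma Mf_index: "p < 2*g \<Longrightarrow> q < 2*g \<Longrightarrow> Mf g \<phi> $$ (p,q) = of_int (dl p q + 2 * \<phi> p q)"
  by (simp add: Mf_def)

lemma Mf_carrier[simp]: "Mf g \<phi> \<in> carrier_mat (2*g) (2*g)"
  by (simp add: Mf_def)

lemma Y4_intro:
  assumes "Ycond g a b c"
  shows "Mf g (emb g a b c) \<in> Y4 g"
  unfolding Y4_def
proof (intro CollectI conjI exI)
  show "Mf g (emb g a b c) \<in> Sp4 g"
    using assms by (intro Mf_emb_Sp) (simp add: Ycond_def)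
  show "\<forall>i<g. \<forall>j<g. Mf g (emb g a b c) $$ (i, j) = of_int ((if i = j then 1 else 0) + 2 * a i j) \<and>
           Mf g (emb g a b c) $$ (i, g + j) = of_int (2 * b i j) \<and>
           Mf g (emb g a b c) $$ (g + i, j) = of_int (2 * c i j) \<and>
           Mf g (emb g a b c) $$ (g + i, g + j) = of_int ((if i = j then 1 else 0) - 2 * a j i) \<and>
           even (b i j - b j i) \<and> even (c i j - c j i)"
    using assms by (auto simp: Mf_index emb_def dl_def Ycond_def)
  show "\<forall>i<g. even (b i i) \<and> even (c i i)" "even (\<Sum>i<g. a i i)"
    using assms by (auto simp: Ycond_def)
qed

lemma Y4_elim:
  assumes "X \<in> Y4 g"
  obtains a b c where "Ycond g a b c" "X = Mf g (emb g a b c)"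
proof -
  from assms obtain a b c where X: "X \<in> Sp4 g" and
    E: "\<forall>i<g. \<forall>j<g.
          X $$ (i, j) = of_int ((if i = j then 1 else 0) + 2 * a i j)
        \<and> X $$ (i, g + j) = of_int (2 * b i j)
        \<and> X $$ (g + i, j) = of_int (2 * c i j)
        \<and> X $$ (g + i, g + j) = of_int ((if i = j then 1 else 0) - 2 * a j i)
        \<and> even (b i j - b j i) \<and> even (c i j - c j i)"
    and D: "\<forall>i<g. even (b i i) \<and> even (c i i)" and T: "even (\<Sum>i<g. a i i)"
    unfolding Y4_def by blast
  have car: "X \<in> carrier_mat (2*g) (2*g)" using X by (simp add: Sp4_def)
  have "Ycond g a b c" using E D T by (simp add: Ycond_def)
  moreover have "X = Mf g (emb g a b c)"
  proof (rule eq_matI)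
    show "dim_row X = dim_row (Mf g (emb g a b c))" "dim_col X = dim_col (Mf g (emb g a b c))"
      using car by (auto simp: Mf_def)
    fix p q assume "p < dim_row (Mf g (emb g a b c))" "q < dim_col (Mf g (emb g a b c))"
    hence p: "p < 2*g" and q: "q < 2*g" by (auto simp: Mf_def)
    show "X $$ (p, q) = Mf g (emb g a b c) $$ (p, q)"
    proof (cases "p < g"; cases "q < g")
      assume "p < g" "q < g" thus ?thesis using E p q by (simp add: Mf_index emb_def dl_def)
    next
      assume a1: "p < g" "\<not> q < g"
      then obtain j where j: "q = g + j" "j < g" using q by (metis add_diff_inverse_nat add_less_imp_less_left mult_2)
      thus ?thesis using E a1 p q by (simp add: Mf_index emb_def dl_def)
    next
      assume a1: "\<not> p < g" "q < g"
      then obtain i where i: "p = g + i" "i < g" using p by (metis add_diff_inverse_nat add_less_imp_less_left mult_2)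
      thus ?thesis using E a1 p q by (simp add: Mf_index emb_def dl_def)
    next
      assume a1: "\<not> p < g" "\<not> q < g"
      then obtain i j where i: "p = g + i" "i < g" "q = g + j" "j < g" using p q
        by (metis add_diff_inverse_nat add_less_imp_less_left mult_2)
      thus ?thesis using E a1 p q by (simp add: Mf_index emb_def dl_def)
    qed
  qed
  ultimately show ?thesis using that by blast
qed

lemma Mf_mult: "Mf g \<phi> * Mf g \<psi> = Mf g (\<lambda>p q. \<phi> p q + \<psi> p q)"
  unfolding Mf_def imat_mult
proof (rule imat_eqI)
  fix i j assume i: "i < 2*g" and j: "j < 2*g"
  have "cv (2*g) (\<lambda>p q. dl p q + 2 * \<phi> p q) (\<lambda>p q. dl p q + 2 * \<psi> p q) i j
     = dl i j + 2 * \<phi> i j + 2 * (\<psi> i j + 2 * cv (2*g) \<phi> \<psi> i j)"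
    using i j by (simp add: cv_lin_right cv_lin_left cv_dl_right cv_dl_left)
  thus "4 dvd (cv (2*g) (\<lambda>p q. dl p q + 2 * \<phi> p q) (\<lambda>p q. dl p q + 2 * \<psi> p q) i j -
              (dl i j + 2 * (\<phi> i j + \<psi> i j)))"
    by (simp add: algebra_simps)
qed

lemma Mf_cong2:
  assumes "\<And>p q. p < 2*g \<Longrightarrow> q < 2*g \<Longrightarrow> even (\<phi> p q - \<psi> p q)"
  shows "Mf g \<phi> = Mf g \<psi>"
  unfolding Mf_def
proof (rule imat_eqI)
  fix i j assume "i < 2*g" "j < 2*g"
  then obtain t where "\<phi> i j - \<psi> i j = 2 * t" using assms by (blast elim: evenE)
  thus "4 dvd (dl i j + 2 * \<phi> i j - (dl i j + 2 * \<psi> i j))"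
    by (simp add: algebra_simps)
qed

lemma Mf_zero: "Mf g (\<lambda>p q. 0) = 1\<^sub>m (2*g)"
  by (simp add: Mf_def imat_dl[symmetric])

lemma Y4_sq: "X \<in> Y4 g \<Longrightarrow> X * X = 1\<^sub>m (2*g)"
proof -
  assume "X \<in> Y4 g"
  then obtain a b c where X: "X = Mf g (emb g a b c)" by (blast elim: Y4_elim)
  have "X * X = Mf g (\<lambda>p q. 0)" unfolding X Mf_mult by (rule Mf_cong2) simp
  thus ?thesis by (simp add: Mf_zero)
qed

lemma emb_add: "emb g a b c p q + emb g a' b' c' p q = emb g (\<lambda>i j. a i j + a' i j) (\<lambda>i j. b i j + b' i j) (\<lambda>i j. c i j + c' i j) p q"
  by (simp add: emb_def)

lemma Y4_mult: "X \<in> Y4 g \<Longrightarrow> Z \<in> Y4 g \<Longrightarrow> X * Z \<in> Y4 g"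
proof -
  assume "X \<in> Y4 g" "Z \<in> Y4 g"
  then obtain a b c a' b' c' where Y1: "Ycond g a b c" "X = Mf g (emb g a b c)"
    and Y2: "Ycond g a' b' c'" "Z = Mf g (emb g a' b' c')" by (metis Y4_elim)
  have "X * Z = Mf g (emb g (\<lambda>i j. a i j + a' i j) (\<lambda>i j. b i j + b' i j) (\<lambda>i j. c i j + c' i j))"
    unfolding Y1 Y2 Mf_mult emb_add ..
  moreover have "Ycond g (\<lambda>i j. a i j + a' i j) (\<lambda>i j. b i j + b' i j) (\<lambda>i j. c i j + c' i j)"
  proof -
    have "(\<Sum>i<g. a i i + a' i i) = (\<Sum>i<g. a i i) + (\<Sum>i<g. a' i i)" by (simp add: sum.distrib)
    moreover have "even (b i j + b' i j - (b j i + b' j i))" "even (c i j + c' i j - (c j i + c' j i))"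
      if "i < g" "j < g" for i j
      using Y1(1) Y2(1) that unfolding Ycond_def
      by (metis add_diff_add even_add)+
    ultimately show ?thesis using Y1(1) Y2(1) unfolding Ycond_def by auto
  qed
  ultimately show ?thesis by (simp add: Y4_intro)
qed

lemma Sp_carrier: "X \<in> Sp4 g \<Longrightarrow> X \<in> carrier_mat (2*g) (2*g)"
  by (simp add: Sp4_def)

lemma J_carrier[simp]: "J_mat g \<in> carrier_mat (2*g) (2*g)"
  by (simp add: J_imat)

lemma Sp_mult: "X \<in> Sp4 g \<Longrightarrow> Z \<in> Sp4 g \<Longrightarrow> X * Z \<in> Sp4 g"
proof -
  assume X: "X \<in> Sp4 g" and Z: "Z \<in> Sp4 g"
  have cX: "X \<in> carrier_mat (2*g) (2*g)" and cZ: "Z \<in> carrier_mat (2*g) (2*g)"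
    using X Z by (auto simp: Sp4_def)
  have eX: "transpose_mat X * J_mat g * X = J_mat g" and eZ: "transpose_mat Z * J_mat g * Z = J_mat g"
    using X Z by (auto simp: Sp4_def)
  have tX: "transpose_mat X \<in> carrier_mat (2*g) (2*g)" and tZ: "transpose_mat Z \<in> carrier_mat (2*g) (2*g)"
    using cX cZ by auto
  have XJ: "transpose_mat X * J_mat g \<in> carrier_mat (2*g) (2*g)" using tX by auto
  have XZ: "X * Z \<in> carrier_mat (2*g) (2*g)" using cX cZ by auto
  have "transpose_mat (X * Z) * J_mat g * (X * Z) = transpose_mat Z * transpose_mat X * J_mat g * (X * Z)"
    by (simp add: transpose_mult[OF cX cZ])
  also have "\<dots> = transpose_mat Z * (transpose_mat X * J_mat g) * (X * Z)"
    by (simp add: assoc_mult_mat[OF tZ tX J_carrier])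
  also have "\<dots> = transpose_mat Z * ((transpose_mat X * J_mat g) * (X * Z))"
    by (rule assoc_mult_mat[OF tZ XJ XZ])
  also have "(transpose_mat X * J_mat g) * (X * Z) = (transpose_mat X * J_mat g * X) * Z"
    by (rule assoc_mult_mat[OF XJ cX cZ, symmetric])
  also have "transpose_mat Z * (transpose_mat X * J_mat g * X * Z) = J_mat g"
    using eX eZ assoc_mult_mat[OF tZ J_carrier cZ] by simp
  finally show ?thesis using cX cZ by (simp add: Sp4_def)
qed

lemma Sp_one: "1\<^sub>m (2*g) \<in> Sp4 g"
  using left_mult_one_mat[OF J_carrier[of g]] right_mult_one_mat[OF J_carrier[of g]] by (simp add: Sp4_def)



definition xi :: "nat \<Rightarrow> nat \<Rightarrow> nat \<Rightarrow> nat \<Rightarrow> nat \<Rightarrow> int" where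
  "xi g k l = (\<lambda>p q. dl p q + (if p = k \<and> q = l then 1 else 0) - (if p = g + l \<and> q = g + k then 1 else 0))"

lemma cv_xi_left:
  assumes "p < n" "l < n" "g + k < n"
  shows "cv n (xi g k l) F p q = F p q + (if p = k then F l q else 0) - (if p = g + l then F (g + k) q else 0)"
proof -
  have "cv n (xi g k l) F p q = (\<Sum>r<n. (if r = p then F p q else 0) + (if r = l then (if p = k then F l q else 0) else 0)
     - (if r = g + k then (if p = g + l then F (g + k) q else 0) else 0))"
    unfolding cv_def xi_def dl_def by (rule sum.cong) (auto simp: algebra_simps)
  also have "\<dots> = F p q + (if p = k then F l q else 0) - (if p = g + l then F (g + k) q else 0)"
    using assms by (simp add: sum.distrib sum_subtractf)
  finally show ?thesis .
qed

lemma cv_xi_right: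
  assumes "q < n" "k < n" "g + l < n"
  shows "cv n F (xi g k l) p q = F p q + (if q = l then F p k else 0) - (if q = g + k then F p (g + l) else 0)"
proof -
  have "cv n F (xi g k l) p q = (\<Sum>r<n. (if r = q then F p q else 0) + (if r = k then (if q = l then F p k else 0) else 0)
     - (if r = g + l then (if q = g + k then F p (g + l) else 0) else 0))"
    unfolding cv_def xi_def dl_def by (rule sum.cong) (auto simp: algebra_simps)
  also have "\<dots> = F p q + (if q = l then F p k else 0) - (if q = g + k then F p (g + l) else 0)"
    using assms by (simp add: sum.distrib sum_subtractf)
  finally show ?thesis .
qed

definition Xm :: "nat \<Rightarrow> nat \<Rightarrow> nat \<Rightarrow> 4 mat" where
  "Xm g k l = imat (2*g) (xi g k l)"

lemma Xm_Sp:
  assumes "k < g" "l < g" "k \<noteq> l"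
  shows "Xm g k l \<in> Sp4 g"
  unfolding Xm_def
proof (rule Sp_crit)
  fix p q assume p: "p < 2*g" and q: "q < 2*g"
  define C where "C = cv (2*g) (\<lambda>i j. xi g k l j i) (Jf g)"
  have C: "r < 2*g \<Longrightarrow> C p r = (if r < g then - xi g k l (r+g) p else xi g k l (r-g) p)" for r
    unfolding C_def by (rule cvJ_right)
  have "cv (2*g) C (xi g k l) p q = C p q + (if q = l then C p k else 0) - (if q = g + k then C p (g + l) else 0)"
    using assms q by (intro cv_xi_right) auto
  also have "\<dots> = Jf g p q"
  proof -
    have Cq: "C p q = (if q < g then - xi g k l (q+g) p else xi g k l (q-g) p)" using C q by simp
    have Ck: "C p k = - xi g k l (k+g) p" using C assms by simp
    have Cl: "C p (g+l) = xi g k l l p" using C assms by simp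
    show ?thesis unfolding Cq Ck Cl using assms p q by (auto simp: xi_def dl_def Jf_def)
  qed
  finally show "4 dvd (cv (2*g) C (xi g k l) p q - Jf g p q)" by simp
qed

lemma Xm_conj:
  assumes kl: "k < g" "l < g"
  and H: "\<And>p q. p < 2*g \<Longrightarrow> q < 2*g \<Longrightarrow> even (\<psi> p q + (if p = k then \<psi> l q else 0) - (if p = g + l then \<psi> (g + k) q else 0)
      - \<psi>' p q - (if q = l then \<psi>' p k else 0) + (if q = g + k then \<psi>' p (g + l) else 0))"
  shows "Xm g k l * Mf g \<psi> = Mf g \<psi>' * Xm g k l"
  unfolding Xm_def Mf_def imat_mult
proof (rule imat_eqI)
  fix p q assume p: "p < 2*g" and q: "q < 2*g"
  let ?F = "\<lambda>p q. dl p q + 2 * \<psi> p q" and ?F' = "\<lambda>p q. dl p q + 2 * \<psi>' p q"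
  have L: "cv (2*g) (xi g k l) ?F p q = ?F p q + (if p = k then ?F l q else 0) - (if p = g + l then ?F (g + k) q else 0)"
    using kl p by (intro cv_xi_left) auto
  have R: "cv (2*g) ?F' (xi g k l) p q = ?F' p q + (if q = l then ?F' p k else 0) - (if q = g + k then ?F' p (g + l) else 0)"
    using kl q by (intro cv_xi_right) auto
  obtain t where t: "\<psi> p q + (if p = k then \<psi> l q else 0) - (if p = g + l then \<psi> (g + k) q else 0)
      - \<psi>' p q - (if q = l then \<psi>' p k else 0) + (if q = g + k then \<psi>' p (g + l) else 0) = 2 * t"
    using H[OF p q] by (rule evenE)
  have "cv (2*g) (xi g k l) ?F p q - cv (2*g) ?F' (xi g k l) p q =
     2 * (\<psi> p q + (if p = k then \<psi> l q else 0) - (if p = g + l then \<psi> (g + k) q else 0)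
      - \<psi>' p q - (if q = l then \<psi>' p k else 0) + (if q = g + k then \<psi>' p (g + l) else 0))"
    unfolding L R by (auto simp: dl_def algebra_simps)
  thus "4 dvd (cv (2*g) (xi g k l) ?F p q - cv (2*g) ?F' (xi g k l) p q)"
    unfolding t by simp
qed



definition Dset :: "nat \<Rightarrow> 4 mat set" where
  "Dset g = {n' * n | n n'. n \<in> Y4 g \<and> n' \<in> Y4 g \<and> (\<exists>x\<in>Sp4 g. x * n = n' * x)}"

definition E :: "nat \<Rightarrow> nat \<Rightarrow> nat \<Rightarrow> nat \<Rightarrow> int" where
  "E i j = (\<lambda>p q. if p = i \<and> q = j then 1 else 0)"

definition Z0 :: "nat \<Rightarrow> nat \<Rightarrow> int" where "Z0 = (\<lambda>p q. 0)"

lemma DsetI: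
  assumes "Ycond g a b c" "Ycond g a' b' c'" "x \<in> Sp4 g"
    "x * Mf g (emb g a b c) = Mf g (emb g a' b' c') * x"
    "\<And>p q. p < 2*g \<Longrightarrow> q < 2*g \<Longrightarrow> even (emb g a' b' c' p q + emb g a b c p q - \<gamma> p q)"
  shows "Mf g \<gamma> \<in> Dset g"
proof -
  have "Mf g (emb g a' b' c') * Mf g (emb g a b c) = Mf g \<gamma>"
    unfolding Mf_mult by (rule Mf_cong2) (use assms(5) in auto)
  moreover have "Mf g (emb g a b c) \<in> Y4 g" "Mf g (emb g a' b' c') \<in> Y4 g"
    using assms Y4_intro by auto
  ultimately have "\<exists>n n'. Mf g \<gamma> = n' * n \<and> n \<in> Y4 g \<and> n' \<in> Y4 g \<and> (\<exists>x\<in>Sp4 g. x * n = n' * x)"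
    using assms(3,4) by (intro exI[of _ "Mf g (emb g a b c)"] exI[of _ "Mf g (emb g a' b' c')"]) auto
  thus ?thesis by (simp add: Dset_def)
qed

lemma sumE_diag: "(\<Sum>i<g. E l m i i) = (if l = m \<and> l < g then 1 else 0)"
proof (cases "l = m")
  case False
  have "(\<Sum>i<g. E l m i i) = 0" unfolding E_def using False by (intro sum.neutral) auto
  thus ?thesis using False by simp
qed (simp add: E_def)

lemma genA:
  assumes "k < g" "m < g" "l < g" "k \<noteq> m" "k \<noteq> l" "l \<noteq> m"
  shows "Mf g (emb g (E k m) Z0 Z0) \<in> Dset g"
proof (rule DsetI[where x = "Xm g k l"])
  show "Ycond g (E l m) Z0 Z0" "Ycond g (\<lambda>i j. E l m i j + E k m i j) Z0 Z0"
    using assms by (auto simp: Ycond_def Z0_def sum.distrib sumE_diag)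
  show "Xm g k l \<in> Sp4 g" using assms by (intro Xm_Sp) auto
  show "Xm g k l * Mf g (emb g (E l m) Z0 Z0) = Mf g (emb g (\<lambda>i j. E l m i j + E k m i j) Z0 Z0) * Xm g k l"
    using assms by (intro Xm_conj) (auto simp: emb_def E_def Z0_def)
  show "even (emb g (\<lambda>i j. E l m i j + E k m i j) Z0 Z0 p q + emb g (E l m) Z0 Z0 p q - emb g (E k m) Z0 Z0 p q)" for p q
    by (auto simp: emb_def E_def Z0_def)
qed

lemma even_zeroI: "(x::int) = 0 \<Longrightarrow> even x" by simp

lemma conjB:
  assumes kl: "k < g" "l < g"
  and H: "\<And>i j. i < g \<Longrightarrow> j < g \<Longrightarrow> even (B i j + (if i = k then B l j else 0) - B' i j + (if j = k then B' i l else 0))"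
  shows "Xm g k l * Mf g (emb g Z0 B Z0) = Mf g (emb g Z0 B' Z0) * Xm g k l"
proof (rule Xm_conj[OF kl])
  fix p q assume p: "p < 2*g" and q: "q < 2*g"
  show "even (emb g Z0 B Z0 p q + (if p = k then emb g Z0 B Z0 l q else 0) - (if p = g + l then emb g Z0 B Z0 (g + k) q else 0) -
          emb g Z0 B' Z0 p q - (if q = l then emb g Z0 B' Z0 p k else 0) + (if q = g + k then emb g Z0 B' Z0 p (g + l) else 0))"
  proof (cases "p < g \<and> \<not> q < g")
    case True
    then obtain j where j: "q = g + j" "j < g" using q by (metis add_diff_inverse_nat add_less_imp_less_left mult_2)
    have "even (B p j + (if p = k then B l j else 0) - B' p j + (if j = k then B' p l else 0))"
      using H True j by auto
    moreover have "emb g Z0 B Z0 p q + (if p = k then emb g Z0 B Z0 l q else 0) - (if p = g + l then emb g Z0 B Z0 (g + k) q else 0) -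
          emb g Z0 B' Z0 p q - (if q = l then emb g Z0 B' Z0 p k else 0) + (if q = g + k then emb g Z0 B' Z0 p (g + l) else 0)
       = B p j + (if p = k then B l j else 0) - B' p j + (if j = k then B' p l else 0)"
      using True j kl by (simp add: emb_def Z0_def)
    ultimately show ?thesis by simp
  next
    case False
    thus ?thesis using kl by (auto simp: emb_def Z0_def)
  qed
qed

lemma conjC:
  assumes kl: "k < g" "l < g"
  and H: "\<And>i j. i < g \<Longrightarrow> j < g \<Longrightarrow> even (C i j - (if i = l then C k j else 0) - C' i j - (if j = l then C' i k else 0))"
  shows "Xm g k l * Mf g (emb g Z0 Z0 C) = Mf g (emb g Z0 Z0 C') * Xm g k l"
proof (rule Xm_conj[OF kl])
  fix p q assume p: "p < 2*g" and q: "q < 2*g"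
  show "even (emb g Z0 Z0 C p q + (if p = k then emb g Z0 Z0 C l q else 0) - (if p = g + l then emb g Z0 Z0 C (g + k) q else 0) -
          emb g Z0 Z0 C' p q - (if q = l then emb g Z0 Z0 C' p k else 0) + (if q = g + k then emb g Z0 Z0 C' p (g + l) else 0))"
  proof (cases "\<not> p < g \<and> q < g")
    case True
    then obtain i where i: "p = g + i" "i < g" using p by (metis add_diff_inverse_nat add_less_imp_less_left mult_2)
    have "even (C i q - (if i = l then C k q else 0) - C' i q - (if q = l then C' i k else 0))"
      using H True i by auto
    moreover have "emb g Z0 Z0 C p q + (if p = k then emb g Z0 Z0 C l q else 0) - (if p = g + l then emb g Z0 Z0 C (g + k) q else 0) -
          emb g Z0 Z0 C' p q - (if q = l then emb g Z0 Z0 C' p k else 0) + (if q = g + k then emb g Z0 Z0 C' p (g + l) else 0)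
        = C i q - (if i = l then C k q else 0) - C' i q - (if q = l then C' i k else 0)"
      using True i kl by (simp add: emb_def Z0_def)
    ultimately show ?thesis by simp
  next
    case False
    thus ?thesis using kl by (auto simp: emb_def Z0_def)
  qed
qed

lemma genB:
  assumes "k < g" "m < g" "l < g" "k \<noteq> m" "k \<noteq> l" "l \<noteq> m"
  shows "Mf g (emb g Z0 (\<lambda>i j. E k m i j + E m k i j) Z0) \<in> Dset g"
proof (rule DsetI[where x = "Xm g k l"])
  show "Ycond g Z0 (\<lambda>i j. E l m i j + E m l i j) Z0" "Ycond g Z0 (\<lambda>i j. E l m i j + E m l i j + E k m i j + E m k i j) Z0"
    using assms by (auto simp: Ycond_def Z0_def E_def)
  show "Xm g k l \<in> Sp4 g" using assms by (intro Xm_Sp) auto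
  show "Xm g k l * Mf g (emb g Z0 (\<lambda>i j. E l m i j + E m l i j) Z0) = Mf g (emb g Z0 (\<lambda>i j. E l m i j + E m l i j + E k m i j + E m k i j) Z0) * Xm g k l"
    using assms by (intro conjB even_zeroI) (auto simp: E_def)
  show "even (emb g Z0 (\<lambda>i j. E l m i j + E m l i j + E k m i j + E m k i j) Z0 p q + emb g Z0 (\<lambda>i j. E l m i j + E m l i j) Z0 p q - emb g Z0 (\<lambda>i j. E k m i j + E m k i j) Z0 p q)" for p q
  proof -
    have "emb g Z0 (\<lambda>i j. E l m i j + E m l i j + E k m i j + E m k i j) Z0 p q + emb g Z0 (\<lambda>i j. E l m i j + E m l i j) Z0 p q - emb g Z0 (\<lambda>i j. E k m i j + E m k i j) Z0 p q
      = 2 * emb g Z0 (\<lambda>i j. E l m i j + E m l i j) Z0 p q" by (simp add: emb_def Z0_def)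
    then show ?thesis by (metis dvd_triv_left)
  qed
qed

lemma genC:
  assumes "k < g" "m < g" "l < g" "k \<noteq> m" "k \<noteq> l" "l \<noteq> m"
  shows "Mf g (emb g Z0 Z0 (\<lambda>i j. E k m i j + E m k i j)) \<in> Dset g"
proof (rule DsetI[where x = "Xm g l k"])
  show "Ycond g Z0 Z0 (\<lambda>i j. E l m i j + E m l i j)" "Ycond g Z0 Z0 (\<lambda>i j. E l m i j + E m l i j - E k m i j - E m k i j)"
    using assms by (auto simp: Ycond_def Z0_def E_def)
  show "Xm g l k \<in> Sp4 g" using assms by (intro Xm_Sp) auto
  show "Xm g l k * Mf g (emb g Z0 Z0 (\<lambda>i j. E l m i j + E m l i j)) = Mf g (emb g Z0 Z0 (\<lambda>i j. E l m i j + E m l i j - E k m i j - E m k i j)) * Xm g l k"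
    using assms by (intro conjC even_zeroI) (auto simp: E_def)
  show "even (emb g Z0 Z0 (\<lambda>i j. E l m i j + E m l i j - E k m i j - E m k i j) p q + emb g Z0 Z0 (\<lambda>i j. E l m i j + E m l i j) p q - emb g Z0 Z0 (\<lambda>i j. E k m i j + E m k i j) p q)" for p q
  proof -
    have "emb g Z0 Z0 (\<lambda>i j. E l m i j + E m l i j - E k m i j - E m k i j) p q + emb g Z0 Z0 (\<lambda>i j. E l m i j + E m l i j) p q - emb g Z0 Z0 (\<lambda>i j. E k m i j + E m k i j) p q
      = 2 * (emb g Z0 Z0 (\<lambda>i j. E l m i j + E m l i j) p q - emb g Z0 Z0 (\<lambda>i j. E k m i j + E m k i j) p q)" by (simp add: emb_def Z0_def)
    then show ?thesis by (metis dvd_triv_left)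
  qed
qed

lemma genD:
  assumes "k < g" "0 < k"
  shows "Mf g (emb g (\<lambda>i j. E k k i j + E 0 0 i j + E k 0 i j) Z0 Z0) \<in> Dset g"
proof (rule DsetI[where x = "Xm g k 0"])
  show "Ycond g (E 0 k) Z0 Z0"
    using assms by (auto simp: Ycond_def Z0_def sumE_diag)
  show "Ycond g (\<lambda>i j. E 0 k i j + E k k i j - E 0 0 i j - E k 0 i j) Z0 Z0"
    using assms by (auto simp: Ycond_def Z0_def sum.distrib sum_subtractf sumE_diag)
  show "Xm g k 0 \<in> Sp4 g" using assms by (intro Xm_Sp) auto
  show "Xm g k 0 * Mf g (emb g (E 0 k) Z0 Z0) = Mf g (emb g (\<lambda>i j. E 0 k i j + E k k i j - E 0 0 i j - E k 0 i j) Z0 Z0) * Xm g k 0"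
    using assms by (intro Xm_conj) (auto simp: emb_def E_def Z0_def)
  show "even (emb g (\<lambda>i j. E 0 k i j + E k k i j - E 0 0 i j - E k 0 i j) Z0 Z0 p q + emb g (E 0 k) Z0 Z0 p q - emb g (\<lambda>i j. E k k i j + E 0 0 i j + E k 0 i j) Z0 Z0 p q)" for p q
    by (auto simp: emb_def E_def Z0_def)
qed



inductive_set Pset :: "nat \<Rightarrow> 4 mat set" for g where
  P1: "1\<^sub>m (2*g) \<in> Pset g"
| P2: "d \<in> Dset g \<Longrightarrow> p \<in> Pset g \<Longrightarrow> d * p \<in> Pset g"

lemma S_add:
  assumes "Mf g \<gamma> \<in> Dset g" "Mf g \<phi> \<in> Pset g"
  shows "Mf g (\<lambda>p q. c * \<gamma> p q + \<phi> p q) \<in> Pset g"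
proof (cases "even c")
  case True
  have "Mf g (\<lambda>p q. c * \<gamma> p q + \<phi> p q) = Mf g \<phi>" by (rule Mf_cong2) (use True in auto)
  thus ?thesis using assms by simp
next
  case False
  have "Mf g (\<lambda>p q. c * \<gamma> p q + \<phi> p q) = Mf g (\<lambda>p q. \<gamma> p q + \<phi> p q)"
  proof (rule Mf_cong2)
    fix p q
    have "c * \<gamma> p q + \<phi> p q - (\<gamma> p q + \<phi> p q) = (c - 1) * \<gamma> p q" by (simp add: algebra_simps)
    moreover have "even (c - 1)" using False by simp
    ultimately show "even (c * \<gamma> p q + \<phi> p q - (\<gamma> p q + \<phi> p q))" by simp
  qed
  also have "\<dots> = Mf g \<gamma> * Mf g \<phi>" by (simp add: Mf_mult)
  finally show ?thesis using assms by (simp add: Pset.P2)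
qed

lemma S_sum:
  assumes "finite F" "\<forall>i\<in>F. Mf g (\<gamma> i) \<in> Dset g" "Mf g \<phi> \<in> Pset g"
  shows "Mf g (\<lambda>p q. (\<Sum>i\<in>F. c i * \<gamma> i p q) + \<phi> p q) \<in> Pset g"
  using assms
proof (induction F rule: finite_induct)
  case empty thus ?case by simp
next
  case (insert x F)
  have "Mf g (\<lambda>p q. (\<Sum>i\<in>insert x F. c i * \<gamma> i p q) + \<phi> p q) = Mf g (\<lambda>p q. c x * \<gamma> x p q + ((\<Sum>i\<in>F. c i * \<gamma> i p q) + \<phi> p q))"
    using insert by (simp add: add.assoc)
  thus ?case using S_add insert by simp
qed

lemma sumE1: "finite F \<Longrightarrow> (\<Sum>x\<in>F. f x * E (fst x) (snd x) i j) = (if (i,j) \<in> F then f (i,j) else 0)"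
proof -
  assume F: "finite F"
  have "(\<Sum>x\<in>F. f x * E (fst x) (snd x) i j) = (\<Sum>x\<in>F. if x = (i,j) then f (i,j) else 0)"
    by (rule sum.cong) (auto simp: E_def)
  thus ?thesis using F by simp
qed

lemma sumE2: "finite F \<Longrightarrow> (\<Sum>x\<in>F. f x * E (snd x) (fst x) i j) = (if (j,i) \<in> F then f (j,i) else 0)"
proof -
  assume F: "finite F"
  have "(\<Sum>x\<in>F. f x * E (snd x) (fst x) i j) = (\<Sum>x\<in>F. if x = (j,i) then f (j,i) else 0)"
    by (rule sum.cong) (auto simp: E_def)
  thus ?thesis using F by simp
qed

lemma sumD1: "finite F \<Longrightarrow> (\<Sum>k\<in>F. f k * E k k i j) = (if i = j \<and> i \<in> F then f i else 0)"
proof -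
  assume F: "finite F"
  have "(\<Sum>k\<in>F. f k * E k k i j) = (\<Sum>k\<in>F. if k = i then (if i = j then f i else 0) else 0)"
    by (rule sum.cong) (auto simp: E_def)
  thus ?thesis using F by simp
qed

lemma sumD2: "(\<Sum>k\<in>F. f k * E 0 0 i j) = (if i = 0 \<and> j = 0 then sum f F else 0)"
  by (simp add: E_def)

lemma sumD3: "finite F \<Longrightarrow> (\<Sum>k\<in>F. f k * E k 0 i j) = (if j = 0 \<and> i \<in> F then f i else 0)"
proof -
  assume F: "finite F"
  have "(\<Sum>k\<in>F. f k * E k 0 i j) = (\<Sum>k\<in>F. if k = i then (if j = 0 then f i else 0) else 0)"
    by (rule sum.cong) (auto simp: E_def)
  thus ?thesis using F by simp
qed

lemma emb_even:
  assumes "\<And>i j. i < g \<Longrightarrow> j < g \<Longrightarrow> even (a i j - a' i j) \<and> even (b i j - b' i j) \<and> even (c i j - c' i j)"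
    "p < 2*g" "q < 2*g"
  shows "even (emb g a b c p q - emb g a' b' c' p q)"
proof -
  have "p - g < g" "q - g < g" using assms(2,3) by auto
  thus ?thesis using assms(1)[of p q] assms(1)[of p "q-g"] assms(1)[of "p-g" q] assms(1)[of "q-g" "p-g"]
    by (auto simp: emb_def)
qed

lemma emb_neg: "g \<le> p \<Longrightarrow> g \<le> q \<Longrightarrow> p < 2*g \<Longrightarrow> q < 2*g \<Longrightarrow> emb g A B C p q = - emb g A B C (q-g) (p-g)"
  by (subgoal_tac "p - g < g \<and> q - g < g") (auto simp: emb_def)

lemma third_index: "3 \<le> g \<Longrightarrow> \<exists>l<g. l \<noteq> k \<and> l \<noteq> (m::nat)"
proof -
  assume "3 \<le> g"
  have "\<exists>l\<in>{0,1,2::nat}. l \<noteq> k \<and> l \<noteq> m" by auto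
  then obtain l where l: "l \<in> {0,1,2::nat}" "l \<noteq> k" "l \<noteq> m" by blast
  hence "l < g" using \<open>3 \<le> g\<close> by auto
  thus ?thesis using l by blast
qed

lemma Y4_in_P:
  assumes g3: "3 \<le> g" and X: "X \<in> Y4 g"
  shows "X \<in> Pset g"
proof -
  obtain a b c where Y: "Ycond g a b c" and XM: "X = Mf g (emb g a b c)" using X by (rule Y4_elim)
  define FA where "FA = {x::nat\<times>nat. fst x < g \<and> snd x < g \<and> fst x \<noteq> snd x}"
  define FB where "FB = {x::nat\<times>nat. fst x < snd x \<and> snd x < g}"
  define FD where "FD = {k::nat. 0 < k \<and> k < g}"
  define \<gamma>A where "\<gamma>A x = emb g (E (fst x) (snd x)) Z0 Z0" for x :: "nat\<times>nat"
  define \<gamma>B where "\<gamma>B x = emb g Z0 (\<lambda>i j. E (fst x) (snd x) i j + E (snd x) (fst x) i j) Z0" for x :: "nat\<times>nat"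
  define \<gamma>C where "\<gamma>C x = emb g Z0 Z0 (\<lambda>i j. E (fst x) (snd x) i j + E (snd x) (fst x) i j)" for x :: "nat\<times>nat"
  define \<gamma>D where "\<gamma>D k = emb g (\<lambda>i j. E k k i j + E 0 0 i j + E k 0 i j) Z0 Z0" for k
  define cA where "cA x = a (fst x) (snd x) + (if snd x = 0 then a (fst x) (fst x) else 0)" for x :: "nat\<times>nat"
  define cB where "cB x = b (fst x) (snd x)" for x :: "nat\<times>nat"
  define cC where "cC x = c (fst x) (snd x)" for x :: "nat\<times>nat"
  define cD where "cD k = a k k" for k
  have fA: "finite FA" unfolding FA_def by (rule finite_subset[of _ "{..<g} \<times> {..<g}"]) auto
  have fB: "finite FB" unfolding FB_def by (rule finite_subset[of _ "{..<g} \<times> {..<g}"]) auto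
  have fD: "finite FD" unfolding FD_def by auto
  have gA: "\<forall>x\<in>FA. Mf g (\<gamma>A x) \<in> Dset g"
  proof
    fix x assume "x \<in> FA"
    then obtain k m where x: "x = (k,m)" "k < g" "m < g" "k \<noteq> m" unfolding FA_def by (cases x) auto
    obtain l where "l < g" "l \<noteq> k" "l \<noteq> m" using third_index[OF g3] by blast
    thus "Mf g (\<gamma>A x) \<in> Dset g" unfolding \<gamma>A_def using x genA[of k g m l] by auto
  qed
  have gB: "\<forall>x\<in>FB. Mf g (\<gamma>B x) \<in> Dset g"
  proof
    fix x assume "x \<in> FB"
    then obtain k m where x: "x = (k,m)" "k < g" "m < g" "k \<noteq> m" unfolding FB_def by (cases x) auto
    obtain l where "l < g" "l \<noteq> k" "l \<noteq> m" using third_index[OF g3] by blast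
    thus "Mf g (\<gamma>B x) \<in> Dset g" unfolding \<gamma>B_def using x genB[of k g m l] by auto
  qed
  have gC: "\<forall>x\<in>FB. Mf g (\<gamma>C x) \<in> Dset g"
  proof
    fix x assume "x \<in> FB"
    then obtain k m where x: "x = (k,m)" "k < g" "m < g" "k \<noteq> m" unfolding FB_def by (cases x) auto
    obtain l where "l < g" "l \<noteq> k" "l \<noteq> m" using third_index[OF g3] by blast
    thus "Mf g (\<gamma>C x) \<in> Dset g" unfolding \<gamma>C_def using x genC[of k g m l] by auto
  qed
  have gD: "\<forall>k\<in>FD. Mf g (\<gamma>D k) \<in> Dset g"
    unfolding \<gamma>D_def FD_def using genD by auto
  define \<Phi> where "\<Phi> = (\<lambda>p q. (\<Sum>x\<in>FA. cA x * \<gamma>A x p q) + ((\<Sum>x\<in>FB. cB x * \<gamma>B x p q)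
      + ((\<Sum>x\<in>FB. cC x * \<gamma>C x p q) + ((\<Sum>k\<in>FD. cD k * \<gamma>D k p q) + Z0 p q))))"
  have P0: "Mf g Z0 \<in> Pset g" unfolding Z0_def Mf_zero by (rule Pset.P1)
  have P\<Phi>: "Mf g \<Phi> \<in> Pset g"
    unfolding \<Phi>_def
    by (intro S_sum fA fB fD gA gB gC gD P0)
  define a' where "a' i j = (if (i,j) \<in> FA then cA (i,j) else 0) + (if i = j \<and> i \<in> FD then cD i else 0)
      + (if i = 0 \<and> j = 0 then sum cD FD else 0) + (if j = 0 \<and> i \<in> FD then cD i else 0)" for i j
  define b' where "b' i j = (if (i,j) \<in> FB then cB (i,j) else 0) + (if (j,i) \<in> FB then cB (j,i) else 0)" for i j
  define c' where "c' i j = (if (i,j) \<in> FB then cC (i,j) else 0) + (if (j,i) \<in> FB then cC (j,i) else 0)" for i j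
  have \<Phi>1: "\<Phi> p q = a' p q" if "p < g" "q < g" for p q
      using that unfolding \<Phi>_def \<gamma>A_def \<gamma>B_def \<gamma>C_def \<gamma>D_def a'_def
      by (simp add: emb_def Z0_def distrib_left sum.distrib sumE1 sumD1 sumD2 sumD3 fA fD)
  have \<Phi>_eq: "\<Phi> p q = emb g a' b' c' p q" if pq: "p < 2*g" "q < 2*g" for p q
  proof (cases "p < g"; cases "q < g")
    assume "p < g" "q < g"
    thus ?thesis unfolding \<Phi>_def \<gamma>A_def \<gamma>B_def \<gamma>C_def \<gamma>D_def a'_def
      by (simp add: emb_def Z0_def distrib_left sum.distrib sumE1 sumD1 sumD2 sumD3 fA fD)
  next
    assume "p < g" "\<not> q < g"
    thus ?thesis unfolding \<Phi>_def \<gamma>A_def \<gamma>B_def \<gamma>C_def \<gamma>D_def b'_def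
      by (simp add: emb_def Z0_def distrib_left sum.distrib sumE1 sumE2 fB)
  next
    assume "\<not> p < g" "q < g"
    thus ?thesis unfolding \<Phi>_def \<gamma>A_def \<gamma>B_def \<gamma>C_def \<gamma>D_def c'_def
      by (simp add: emb_def Z0_def distrib_left sum.distrib sumE1 sumE2 fB)
  next
    assume a1: "\<not> p < g" "\<not> q < g"
    hence gp: "g \<le> p" "g \<le> q" by auto
    have "\<Phi> p q = - \<Phi> (q-g) (p-g)" unfolding \<Phi>_def \<gamma>A_def \<gamma>B_def \<gamma>C_def \<gamma>D_def
      by (simp only: emb_neg[OF gp pq] mult_minus_right sum_negf minus_add_distrib) (simp add: Z0_def)
    also have "\<dots> = - a' (q-g) (p-g)" using pq gp by (subst \<Phi>1) auto
    finally show ?thesis using a1 by (simp add: emb_def)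
  qed
  have g0: "0 < g" using g3 by simp
  have tr: "(\<Sum>i<g. a i i) = a 0 0 + sum cD FD"
  proof -
    have "{..<g} = insert 0 FD" unfolding FD_def using g0 by auto
    thus ?thesis using fD by (simp add: cD_def FD_def)
  qed
  have ev: "even (a i j - a' i j) \<and> even (b i j - b' i j) \<and> even (c i j - c' i j)" if ij: "i < g" "j < g" for i j
  proof (intro conjI)
    show "even (a i j - a' i j)"
    proof (cases "i = j")
      case False
      hence "a' i j = a i j + 2 * (if j = 0 then a i i else 0)"
        using ij unfolding a'_def FA_def FD_def cA_def cD_def by auto
      thus ?thesis by simp
    next
      case True
      show ?thesis
      proof (cases "i = 0")
        case False
        hence "a' i j = a i j" using True ij unfolding a'_def FA_def FD_def cD_def by auto
        thus ?thesis by simp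
      next
        case True
        hence "a' i j = sum cD FD" using \<open>i = j\<close> unfolding a'_def FA_def FD_def by auto
        moreover have "even (\<Sum>i<g. a i i)" using Y by (simp add: Ycond_def)
        ultimately show ?thesis using True \<open>i = j\<close> tr by (simp add: algebra_simps)
      qed
    qed
    show "even (b i j - b' i j)"
      using Y ij unfolding b'_def FB_def cB_def Ycond_def by (cases i j rule: linorder_cases) auto
    show "even (c i j - c' i j)"
      using Y ij unfolding c'_def FB_def cC_def Ycond_def by (cases i j rule: linorder_cases) auto
  qed
  have "Mf g (emb g a b c) = Mf g \<Phi>"
  proof (rule Mf_cong2)
    fix p q assume pq: "p < 2*g" "q < 2*g"
    show "even (emb g a b c p q - \<Phi> p q)" unfolding \<Phi>_eq[OF pq] by (rule emb_even[OF ev pq])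
  qed
  moreover
  ultimately show ?thesis using XM P\<Phi> by simp
qed



theorem corollary6p6:
  fixes g :: nat
  assumes "g \<ge> 3"
  shows "\<forall>f1 f2 :: 4 mat set \<Rightarrow> 4 mat set \<Rightarrow> 'a::ab_group_add.
           cocycle2 (frakH g) f1 \<longrightarrow> cocycle2 (frakH g) f2 \<longrightarrow>
           cohomologous2 (Sp4_group g) (inflation2 (Sp4_group g) (Y4 g) f1)
                                       (inflation2 (Sp4_group g) (Y4 g) f2) \<longrightarrow>
           cohomologous2 (frakH g) f1 f2"
proof (intro allI impI)
  fix f1 f2 :: "4 mat set \<Rightarrow> 4 mat set \<Rightarrow> 'a"
  assume coh: "cohomologous2 (Sp4_group g) (inflation2 (Sp4_group g) (Y4 g) f1) (inflation2 (Sp4_group g) (Y4 g) f2)"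
  define N where "N = Y4 g"
  define rc where "rc x = N #>\<^bsub>Sp4_group g\<^esub> x" for x
  have rc_eq: "rc x = (\<lambda>n. n * x) ` N" for x
    by (auto simp: rc_def r_coset_def Sp4_group_def)
  obtain h :: "4 mat \<Rightarrow> 'a" where hF: "\<And>x y. x \<in> Sp4 g \<Longrightarrow> y \<in> Sp4 g \<Longrightarrow>
      f1 (rc x) (rc y) - f2 (rc x) (rc y) = h y - h (x * y) + h x"
    using coh unfolding cohomologous2_def coboundary2_def inflation2_def rc_def N_def
    by (auto simp: Sp4_group_def)
  define I :: "4 mat" where "I = 1\<^sub>m (2*g)"
  have one: "I \<in> Sp4 g" unfolding I_def by (rule Sp_one)
  have NG: "n \<in> Sp4 g" if "n \<in> N" for n using that unfolding N_def Y4_def by auto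
  have car: "x \<in> carrier_mat (2*g) (2*g)" if "x \<in> Sp4 g" for x using that by (rule Sp_carrier)
  have assoc: "x * y * z = x * (y * z)" if "x \<in> Sp4 g" "y \<in> Sp4 g" "z \<in> Sp4 g" for x y z
    by (rule assoc_mult_mat[OF car[OF that(1)] car[OF that(2)] car[OF that(3)]])
  have lone: "I * x = x" if "x \<in> Sp4 g" for x using car[OF that] unfolding I_def by simp
  have rone: "x * I = x" if "x \<in> Sp4 g" for x using car[OF that] unfolding I_def by simp
  have mulG: "x * y \<in> Sp4 g" if "x \<in> Sp4 g" "y \<in> Sp4 g" for x y using that by (rule Sp_mult)
  have mulN: "x * y \<in> N" if "x \<in> N" "y \<in> N" for x y using that unfolding N_def by (rule Y4_mult)
  have sqN: "n * n = I" if "n \<in> N" for n using that unfolding N_def I_def by (rule Y4_sq)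
  have IN: "I \<in> N"
  proof -
    have "emb g Z0 Z0 Z0 = Z0" by (intro ext) (simp add: emb_def Z0_def)
    moreover have "Ycond g Z0 Z0 Z0" by (simp add: Ycond_def Z0_def)
    ultimately show ?thesis using Y4_intro[of g Z0 Z0 Z0] Mf_zero unfolding N_def I_def Z0_def by simp
  qed
  have c1: "rc n = N" if "n \<in> N" for n
  proof
    show "rc n \<subseteq> N" using that mulN unfolding rc_eq by auto
    show "N \<subseteq> rc n"
    proof
      fix m assume m: "m \<in> N"
      have "m = (m * n) * n" using assoc[OF NG[OF m] NG[OF that] NG[OF that]] sqN[OF that] rone[OF NG[OF m]] by simp
      thus "m \<in> rc n" unfolding rc_eq using mulN[OF m that] by blast
    qed
  qed
  have c2: "rc (n * y) = rc y" if "n \<in> N" "y \<in> Sp4 g" for n y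
  proof -
    have "rc (n * y) = (\<lambda>m. m * y) ` ((\<lambda>m. m * n) ` N)"
      unfolding rc_eq image_image using assoc NG that by (intro image_cong) auto
    also have "(\<lambda>m. m * n) ` N = N" using c1[OF that(1)] unfolding rc_eq .
    finally show ?thesis unfolding rc_eq .
  qed
  define k where "k n = h n - h I" for n
  have A: "h (n * z) = h z + k n" if "n \<in> N" "z \<in> Sp4 g" for n z
  proof -
    have "h z - h (n * z) + h n = h z - h (I * z) + h I"
      using hF[OF NG[OF that(1)] that(2)] hF[OF one that(2)] c1[OF that(1)] c1[OF IN] by simp
    thus ?thesis using lone[OF that(2)] unfolding k_def by (simp add: algebra_simps)
  qed
  have B: "h (x * (n * y)) = k n + h (x * y)" if "x \<in> Sp4 g" "n \<in> N" "y \<in> Sp4 g" for x n y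
  proof -
    have "h (n * y) - h (x * (n * y)) + h x = h y - h (x * y) + h x"
      using hF[OF that(1) mulG[OF NG[OF that(2)] that(3)]] hF[OF that(1) that(3)] c2[OF that(2,3)] by simp
    thus ?thesis using A[OF that(2,3)] by (simp add: algebra_simps)
  qed
  have C: "k n = k n'" if "x \<in> Sp4 g" "n \<in> N" "n' \<in> N" "x * n = n' * x" for x n n'
  proof -
    have "h (x * n) = k n + h x" using B[OF that(1,2) one] rone[OF NG[OF that(2)]] rone[OF that(1)] by simp
    moreover have "h (n' * x) = h x + k n'" using A[OF that(3,1)] .
    ultimately show ?thesis using that(4) by (simp add: algebra_simps)
  qed
  have Dk: "k n + k n = 0" if "n \<in> N" for n
  proof -
    have "h I = h n + k n" using A[OF that NG[OF that]] sqN[OF that] by simp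
    thus ?thesis unfolding k_def by (simp add: algebra_simps)
  qed
  have E: "h (d * z) = h z" if dD: "d \<in> Dset g" and zS: "z \<in> Sp4 g" for d z
  proof -
    obtain n n' x where d: "d = n' * n" "n \<in> N" "n' \<in> N" "x \<in> Sp4 g" "x * n = n' * x"
      using dD unfolding Dset_def N_def by blast
    have "h (d * z) = h (n' * (n * z))" unfolding d(1) using assoc NG d that by simp
    also have "\<dots> = h z + k n + k n'" using A[OF d(3) mulG[OF NG[OF d(2)] that(2)]] A[OF d(2) that(2)]
      by (simp add: algebra_simps)
    also have "\<dots> = h z" using C[OF d(4,2,3,5)] Dk[OF d(2)] by (simp add: add.assoc)
    finally show ?thesis .
  qed
  have PF: "p \<in> Sp4 g \<and> h p = h I" if "p \<in> Pset g" for p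
    using that
  proof (induction rule: Pset.induct)
    case P1 thus ?case using one unfolding I_def by simp
  next
    case (P2 d p)
    have "d \<in> Sp4 g" using P2(1) NG mulG unfolding Dset_def N_def by blast
    thus ?case using P2 E mulG by simp
  qed
  have kz: "k n = 0" if "n \<in> N" for n
    using PF[OF Y4_in_P[OF assms that[unfolded N_def]]] unfolding k_def by simp
  have hc: "h (m * y) = h y" if "m \<in> N" "y \<in> Sp4 g" for m y using A[OF that] kz[OF that(1)] by simp
  have hp: "h ((m * x) * (m' * y)) = h (x * y)" if "m \<in> N" "m' \<in> N" "x \<in> Sp4 g" "y \<in> Sp4 g" for m m' x y
  proof -
    have "(m * x) * (m' * y) = m * (x * (m' * y))"
      using assoc NG mulG that by simp
    thus ?thesis using hc[OF that(1)] B[OF that(3,2,4)] kz[OF that(2)] mulG NG that by simp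
  qed
  define h' where "h' S = h (SOME s. s \<in> S)" for S
  have carH: "carrier (frakH g) = rc ` Sp4 g"
    by (auto simp: frakH_def FactGroup_def RCOSETS_def rc_def N_def Sp4_group_def)
  have mulH: "mult (frakH g) P R = {a * b | a b. a \<in> P \<and> b \<in> R}" for P R
    by (auto simp: frakH_def FactGroup_def set_mult_def Sp4_group_def)
  have h'1: "h' (rc y) = h y" if "y \<in> Sp4 g" for y
  proof -
    have "I * y \<in> rc y" unfolding rc_eq using IN by blast
    hence "(SOME s. s \<in> rc y) \<in> rc y" by (rule someI)
    then obtain m where "m \<in> N" "(SOME s. s \<in> rc y) = m * y" unfolding rc_eq by blast
    thus ?thesis unfolding h'_def using hc that by simp
  qed
  have h'2: "h' (mult (frakH g) (rc x) (rc y)) = h (x * y)" if "x \<in> Sp4 g" "y \<in> Sp4 g" for x y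
  proof -
    have "(I * x) * (I * y) \<in> mult (frakH g) (rc x) (rc y)" unfolding mulH rc_eq using IN by blast
    hence "(SOME s. s \<in> mult (frakH g) (rc x) (rc y)) \<in> mult (frakH g) (rc x) (rc y)" by (rule someI)
    then obtain m m' where "m \<in> N" "m' \<in> N" "(SOME s. s \<in> mult (frakH g) (rc x) (rc y)) = (m * x) * (m' * y)"
      unfolding mulH rc_eq by blast
    thus ?thesis unfolding h'_def using hp that by simp
  qed
  show "cohomologous2 (frakH g) f1 f2"
    unfolding cohomologous2_def coboundary2_def
  proof (intro exI ballI)
    fix P R assume "P \<in> carrier (frakH g)" "R \<in> carrier (frakH g)"
    then obtain x y where xy: "x \<in> Sp4 g" "y \<in> Sp4 g" "P = rc x" "R = rc y" unfolding carH by blast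
    show "f1 P R - f2 P R = h' R - h' (P \<otimes>\<^bsub>frakH g\<^esub> R) + h' P"
      using hF[OF xy(1,2)] h'1[OF xy(1)] h'1[OF xy(2)] h'2[OF xy(1,2)] xy(3,4) by simp
  qed
qed


end
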